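(* Let $m,n$ be positive integers and let $A=(A(i_1,\dots,i_{2m}))_{1\le i_1,\dots,i_{2m}\le n}$ be any array. Define the array $B=(B(i_1,\dots,i_{2m}))_{1\le i_1,\dots,i_{2m}\le 2n}$ as follows: if for every $1\le s\le m$ exactly one of $i_{2s-1},i_{2s}$ is odd, write the odd one as $2p_s-1$ and the even one as $2q_s$ ($1\le p_s,q_s\le n$) and set $B(i_1,\dots,i_{2m})=(-1)^{k}A(p_1,q_1,\dots,p_m,q_m)$, where $k$ is the number of $s$ with $i_{2s-1}$ even; otherwise set $B(i_1,\dots,i_{2m})=0$. Then $B$ satisfies the alternation condition below and $\mathrm{Pf}^{[2m]}(B)=\mathrm{Det}^{[2m]}(A)$.
   Context: Hyperdeterminant: for an array $A$ indexed by $\{1,\dots,n\}^{2m}$, $\mathrm{Det}^{[2m]}(A):=\frac{1}{n!}\sum_{\sigma_1,\dots,\sigma_{2m}\in\mathfrak{S}_n}\mathrm{sgn}(\sigma_1)\cdots\mathrm{sgn}(\sigma_{2m})\prod_{i=1}^nA(\sigma_1(i),\dots,\sigma_{2m}(i)).$ Alternation condition: an array $B$ indexed by $\{1,\dots,2n\}^{2m}$ satisfies it if, for each $1\le s\le m$, interchanging the arguments $i_{2s-1}$ and $i_{2s}$ multiplies $B(i_1,\dots,i_{2m})$ by $-1$. Hyperpfaffian of such $B$: with $\mathfrak{E}_{2n}=\{\sigma\in\mathfrak{S}_{2n}:\sigma(2i-1)<\sigma(2i),\ 1\le i\le n\}$, $$\mathrm{Pf}^{[2m]}(B):=\frac{1}{n!}\sum_{\sigma_1,\dots,\sigma_m\in\mathfrak{E}_{2n}}\mathrm{sgn}(\sigma_1)\cdots\mathrm{sgn}(\sigma_m)\prod_{i=1}^nB(\sigma_1(2i-1),\sigma_1(2i),\dots,\sigma_m(2i-1),\sigma_m(2i)).$$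 *)

theory Defs
  imports "HOL-Combinatorics.Permutations"
begin

text \<open>An array indexed by \<open>{1..n}^(2m)\<close> is modelled as a function on index lists;
  the list \<open>[i_1, ..., i_{2m}]\<close> (0-based list positions) is the index tuple.
  Only lists of length \<open>2m\<close> with entries in \<open>{1..n}\<close> are relevant.\<close>

definition hyperdet :: "nat \<Rightarrow> nat \<Rightarrow> (nat list \<Rightarrow> 'a::field_char_0) \<Rightarrow> 'a" where
  "hyperdet m n A =
     (1 / fact n) *
     (\<Sum>\<sigma> \<in> PiE {1..2*m} (\<lambda>_. {p. p permutes {1..n}}).
        (\<Prod>j=1..2*m. of_int (sign (\<sigma> j))) *
        (\<Prod>i=1..n. A (map (\<lambda>j. \<sigma> j i) [1..<2*m+1])))"

definition evenperms :: "nat \<Rightarrow> (nat \<Rightarrow> nat) set" where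
  "evenperms n = {\<sigma>. \<sigma> permutes {1..2*n} \<and> (\<forall>i\<in>{1..n}. \<sigma> (2*i-1) < \<sigma> (2*i))}"

definition alternation_cond :: "nat \<Rightarrow> nat \<Rightarrow> (nat list \<Rightarrow> 'a::ab_group_add) \<Rightarrow> bool" where
  "alternation_cond m n B \<longleftrightarrow>
     (\<forall>l. length l = 2*m \<longrightarrow> set l \<subseteq> {1..2*n} \<longrightarrow>
        (\<forall>s\<in>{1..m}. B (l[2*s-2 := l!(2*s-1), 2*s-1 := l!(2*s-2)]) = - B l))"

definition hyperpf :: "nat \<Rightarrow> nat \<Rightarrow> (nat list \<Rightarrow> 'a::field_char_0) \<Rightarrow> 'a" where
  "hyperpf m n B =
     (1 / fact n) *
     (\<Sum>\<sigma> \<in> PiE {1..m} (\<lambda>_. evenperms n).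
        (\<Prod>s=1..m. of_int (sign (\<sigma> s))) *
        (\<Prod>i=1..n. B (concat (map (\<lambda>s. [\<sigma> s (2*i-1), \<sigma> s (2*i)]) [1..<m+1]))))"

text \<open>The array B built from A (list positions 2(s-1), 2(s-1)+1 hold i_{2s-1}, i_{2s}).\<close>
definition pf_array :: "nat \<Rightarrow> (nat list \<Rightarrow> 'a::comm_ring_1) \<Rightarrow> nat list \<Rightarrow> 'a" where
  "pf_array m A l =
     (if \<forall>s<m. odd (l!(2*s)) \<noteq> odd (l!(2*s+1)) then
        (-1) ^ card {s. s < m \<and> even (l!(2*s))} *
        A (concat (map (\<lambda>s. let a = l!(2*s); b = l!(2*s+1) in
                              if odd a then [(a+1) div 2, b div 2] else [(b+1) div 2, a div 2])
                      [0..<m]))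
      else 0)"

end

theory Submission
  imports Defs
begin

definition Psi :: "(nat\<Rightarrow>nat) \<Rightarrow> (nat\<Rightarrow>nat) \<Rightarrow> nat \<Rightarrow> nat" where
  "Psi p q x = (if odd x then 2 * p ((x+1) div 2) - 1 else 2 * q (x div 2))"

lemma Psi_id_id: "Psi id id = id"
  by (rule ext) (auto simp: Psi_def elim: oddE)

lemma Psi_left:
  assumes "p permutes {1..n}"
  shows "permutation (Psi p id) \<and> sign (Psi p id) = sign p"
  using assms finite_atLeastAtMost
proof (induct p rule: permutes_induct)
  case id
  then show ?case using permutation_id by (simp add: Psi_id_id[unfolded id_def] id_def)
next
  case (swap a b p)
  have eq: "Psi (transpose a b \<circ> p) id = transpose (2*a-1) (2*b-1) \<circ> Psi p id"
  proof (rule ext)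
    fix x
    show "Psi (transpose a b \<circ> p) id x = (transpose (2*a-1) (2*b-1) \<circ> Psi p id) x"
      using swap(1,2,3) by (cases "odd x") (auto simp: Psi_def transpose_def)
  qed
  have pp: "permutation p" using swap(5) permutes_imp_permutation by blast
  have "a \<noteq> b" "2*a-1 \<noteq> 2*b-1" using swap(1,2,3) by auto
  have pq: "permutation (Psi p id)" using swap(4) by blast
  have s1: "sign (transpose (2*a-1) (2*b-1) \<circ> Psi p id) = - sign p"
    using sign_compose[OF permutation_swap_id pq, of "2*a-1" "2*b-1"] swap(4) \<open>2*a-1 \<noteq> 2*b-1\<close>
    by (simp add: sign_swap_id)
  have s2: "sign (transpose a b \<circ> p) = - sign p"
    using sign_compose[OF permutation_swap_id pp, of a b] \<open>a \<noteq> b\<close> by (simp add: sign_swap_id)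
  have s3: "permutation (transpose (2*a-1) (2*b-1) \<circ> Psi p id)"
    by (intro permutation_compose permutation_swap_id pq)
  show ?case unfolding eq using s1 s2 s3 by metis
qed

lemma Psi_right:
  assumes "q permutes {1..n}"
  shows "permutation (Psi id q) \<and> sign (Psi id q) = sign q"
  using assms finite_atLeastAtMost
proof (induct q rule: permutes_induct)
  case id
  then show ?case using permutation_id by (simp add: Psi_id_id[unfolded id_def] id_def)
next
  case (swap a b p)
  have eq: "Psi id (transpose a b \<circ> p) = transpose (2*a) (2*b) \<circ> Psi id p"
  proof (rule ext)
    fix x
    show "Psi id (transpose a b \<circ> p) x = (transpose (2*a) (2*b) \<circ> Psi id p) x"
      using swap(1,2,3) by (cases "odd x") (auto simp: Psi_def transpose_def)
  qed
  have pp: "permutation p" using swap(5) permutes_imp_permutation by blast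
  have "a \<noteq> b" "2*a \<noteq> 2*b" using swap(1,2,3) by auto
  have pq: "permutation (Psi id p)" using swap(4) by blast
  have s1: "sign (transpose (2*a) (2*b) \<circ> Psi id p) = - sign p"
    using sign_compose[OF permutation_swap_id pq, of "2*a" "2*b"] swap(4) \<open>2*a \<noteq> 2*b\<close>
    by (simp add: sign_swap_id)
  have s2: "sign (transpose a b \<circ> p) = - sign p"
    using sign_compose[OF permutation_swap_id pp, of a b] \<open>a \<noteq> b\<close> by (simp add: sign_swap_id)
  have s3: "permutation (transpose (2*a) (2*b) \<circ> Psi id p)"
    by (intro permutation_compose permutation_swap_id pq)
  show ?case unfolding eq using s1 s2 s3 by metis
qed

lemma Psi_split: "Psi p q = Psi p id \<circ> Psi id q"
  by (rule ext) (auto simp: Psi_def)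

lemma Psi_sign:
  assumes "p permutes {1..n}" "q permutes {1..n}"
  shows "permutation (Psi p q) \<and> sign (Psi p q) = sign p * sign q"
  using Psi_left[OF assms(1)] Psi_right[OF assms(2)]
  by (metis Psi_split permutation_compose sign_compose)

definition wK :: "nat set \<Rightarrow> nat \<Rightarrow> nat" where
  "wK K x = (if (x+1) div 2 \<in> K then (if odd x then x+1 else x-1) else x)"

lemma wK_sign:
  assumes "finite K" "0 \<notin> K"
  shows "permutation (wK K) \<and> sign (wK K) = (-1) ^ card K"
  using assms
proof (induct K rule: finite_induct)
  case empty
  have "wK {} = id" by (rule ext) (simp add: wK_def)
  then show ?case by simp
next
  case (insert k K)
  have k: "k \<ge> 1" using insert by auto
  have eq: "wK (insert k K) = transpose (2*k-1) (2*k) \<circ> wK K"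
  proof (rule ext)
    fix x
    show "wK (insert k K) x = (transpose (2*k-1) (2*k) \<circ> wK K) x"
      using k insert(2) by (auto simp: wK_def transpose_def elim!: oddE evenE) presburger+
  qed
  have pq: "permutation (wK K)" using insert by blast
  have s1: "sign (transpose (2*k-1) (2*k) \<circ> wK K) = - sign (wK K)"
    using sign_compose[OF permutation_swap_id pq, of "2*k-1" "2*k"] k
    by (simp add: sign_swap_id)
  have s3: "permutation (transpose (2*k-1) (2*k) \<circ> wK K)"
    by (intro permutation_compose permutation_swap_id pq)
  have s4: "sign (transpose (2*k-1) (2*k) \<circ> wK K) = (-1) ^ card (insert k K)"
    using s1 insert by simp
  show ?case unfolding eq using s4 s3 by metis
qed

definition Phi :: "nat \<Rightarrow> (nat\<Rightarrow>nat) \<Rightarrow> (nat\<Rightarrow>nat) \<Rightarrow> nat \<Rightarrow> nat" where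
  "Phi n p q x = (if x \<in> {1..2*n} then (if odd x then min (2 * p ((x+1) div 2) - 1) (2 * q ((x+1) div 2))
       else max (2 * p ((x+1) div 2) - 1) (2 * q ((x+1) div 2))) else x)"

lemma Phi_decomp:
  assumes p: "p permutes {1..n}" and q: "q permutes {1..n}"
  shows "Phi n p q = Psi p q \<circ> wK {i\<in>{1..n}. q i < p i}"
proof (rule ext)
  fix x
  show "Phi n p q x = (Psi p q \<circ> wK {i\<in>{1..n}. q i < p i}) x"
  proof (cases "x \<in> {1..2*n}")
    case True
    define i where "i = (x+1) div 2"
    have i: "i \<in> {1..n}" using True by (auto simp: i_def)
    have pi: "p i \<in> {1..n}" "q i \<in> {1..n}" using i p q by (meson permutes_in_image)+
    show ?thesis
    proof (cases "odd x")
      case True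
      then obtain j where x: "x = 2*j+1" by (auto elim: oddE)
      have ij: "i = j+1" using x by (simp add: i_def)
      show ?thesis using \<open>x \<in> {1..2*n}\<close> pi i unfolding x ij
        by (auto simp: Phi_def Psi_def wK_def)
    next
      case False
      then obtain j where x: "x = 2*j" by (auto elim: evenE)
      have ij: "i = j" using x by (simp add: i_def)
      have "j \<ge> 1" using \<open>x \<in> {1..2*n}\<close> x by auto
      then obtain j' where j': "j = Suc j'" by (cases j) auto
      show ?thesis using \<open>x \<in> {1..2*n}\<close> pi i unfolding x ij j'
        by (auto simp: Phi_def Psi_def wK_def)
    qed
  next
    case False
    have w: "wK {i\<in>{1..n}. q i < p i} x = x" using False by (auto simp: wK_def elim!: oddE)
    have "Psi p q x = x"
    proof (cases "odd x")
      case True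
      then have "(x+1) div 2 \<notin> {1..n}" using False by (auto elim!: oddE)
      then show ?thesis using True p by (simp add: Psi_def permutes_not_in)
    next
      case F: False
      then have "x div 2 \<notin> {1..n}" using False by auto
      then show ?thesis using F q by (simp add: Psi_def permutes_not_in)
    qed
    moreover have "Phi n p q x = x" using False unfolding Phi_def by (simp only: if_False)
    ultimately show ?thesis using w by simp
  qed
qed

lemma Phi_sign:
  assumes p: "p permutes {1..n}" and q: "q permutes {1..n}"
  shows "sign (Phi n p q) * (-1) ^ card {i\<in>{1..n}. q i < p i} = sign p * sign q"
proof -
  let ?K = "{i\<in>{1..n}. q i < p i}"
  have w: "permutation (wK ?K) \<and> sign (wK ?K) = (-1) ^ card ?K" by (rule wK_sign) auto
  have ps: "permutation (Psi p q) \<and> sign (Psi p q) = sign p * sign q" by (rule Psi_sign[OF p q])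
  have "sign (Phi n p q) = sign p * sign q * (-1) ^ card ?K"
    unfolding Phi_decomp[OF p q] using w ps by (simp add: sign_compose)
  then show ?thesis by (simp flip: power_add add: power_even_eq mult.assoc)
qed

lemma pair_cases:
  fixes x n :: nat
  assumes "x \<in> {1..2*n}"
  obtains i where "i \<in> {1..n}" "x = 2*i-1" | i where "i \<in> {1..n}" "x = 2*i"
proof (cases "odd x")
  case True
  then obtain j where "x = 2*j+1" by (auto elim: oddE)
  then show ?thesis using that(1)[of "j+1"] assms by auto
next
  case False
  then obtain j where "x = 2*j" by (auto elim: evenE)
  then show ?thesis using that(2)[of j] assms by auto
qed

lemma Phi_odd: "i \<in> {1..n} \<Longrightarrow> Phi n p q (2*i-1) = min (2 * p i - 1) (2 * q i)"
  by (auto simp: Phi_def elim!: oddE evenE)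

lemma Phi_even: "i \<in> {1..n} \<Longrightarrow> Phi n p q (2*i) = max (2 * p i - 1) (2 * q i)"
  by (auto simp: Phi_def)

definition pairf :: "nat \<Rightarrow> nat \<Rightarrow> nat list" where
  "pairf a b = (if odd a then [(a+1) div 2, b div 2] else [(b+1) div 2, a div 2])"

definition piof :: "nat \<Rightarrow> (nat \<Rightarrow> nat) \<Rightarrow> nat \<Rightarrow> nat" where
  "piof n s i = (if i \<in> {1..n} then (if odd (s (2*i-1)) then (s (2*i-1) + 1) div 2 else (s (2*i) + 1) div 2) else i)"

definition tauof :: "nat \<Rightarrow> (nat \<Rightarrow> nat) \<Rightarrow> nat \<Rightarrow> nat" where
  "tauof n s i = (if i \<in> {1..n} then (if odd (s (2*i-1)) then s (2*i) div 2 else s (2*i-1) div 2) else i)"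

lemma Phi_facts:
  assumes p: "p permutes {1..n}" and q: "q permutes {1..n}" and i: "i \<in> {1..n}"
  shows "odd (Phi n p q (2*i-1)) \<noteq> odd (Phi n p q (2*i))"
    and "even (Phi n p q (2*i-1)) \<longleftrightarrow> q i < p i"
    and "pairf (Phi n p q (2*i-1)) (Phi n p q (2*i)) = [p i, q i]"
    and "Phi n p q (2*i-1) < Phi n p q (2*i)"
proof -
  have pi: "p i \<ge> 1" "q i \<ge> 1" using i p q by (meson atLeastAtMost_iff permutes_in_image)+
  note e = Phi_odd[OF i, of p q] Phi_even[OF i, of p q]
  show "odd (Phi n p q (2*i-1)) \<noteq> odd (Phi n p q (2*i))" unfolding e using pi by (auto simp: min_def max_def)
  show "even (Phi n p q (2*i-1)) \<longleftrightarrow> q i < p i" unfolding e using pi by (auto simp: min_def)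
  show "pairf (Phi n p q (2*i-1)) (Phi n p q (2*i)) = [p i, q i]" unfolding e using pi
    by (auto simp: min_def max_def pairf_def)
  show "Phi n p q (2*i-1) < Phi n p q (2*i)" unfolding e using pi by (auto simp: min_def max_def) presburger
qed

lemma Phi_permutes:
  assumes p: "p permutes {1..n}" and q: "q permutes {1..n}"
  shows "Phi n p q permutes {1..2*n}"
proof -
  let ?K = "{i\<in>{1..n}. q i < p i}"
  have w: "permutation (wK ?K)" using wK_sign[of ?K] by auto
  have ps: "permutation (Psi p q)" using Psi_sign[OF p q] by blast
  have "bij (Phi n p q)" unfolding Phi_decomp[OF p q]
    by (intro permutation_bijective permutation_compose w ps)
  then show ?thesis unfolding permutes_def
    by (auto simp: Phi_def bij_iff)
qed

lemma Phi_evenperms: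
  assumes p: "p permutes {1..n}" and q: "q permutes {1..n}"
  shows "Phi n p q \<in> evenperms n"
  using Phi_permutes[OF p q] Phi_facts(4)[OF p q] by (simp add: evenperms_def)

lemma Phi_inv:
  assumes p: "p permutes {1..n}" and q: "q permutes {1..n}"
  shows "piof n (Phi n p q) = p" "tauof n (Phi n p q) = q"
proof -
  have "piof n (Phi n p q) i = p i \<and> tauof n (Phi n p q) i = q i" for i
  proof (cases "i \<in> {1..n}")
    case True
    have pi: "p i \<ge> 1" "q i \<ge> 1" using True p q by (meson atLeastAtMost_iff permutes_in_image)+
    show ?thesis using True pi unfolding piof_def tauof_def Phi_odd[OF True] Phi_even[OF True]
      by (auto simp: min_def max_def)
  next
    case False
    then show ?thesis using p q unfolding piof_def tauof_def if_not_P[OF False]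
      by (simp add: permutes_not_in)
  qed
  then show "piof n (Phi n p q) = p" "tauof n (Phi n p q) = q" by auto
qed

lemma piof_facts:
  assumes sE: "s \<in> evenperms n" and mix: "\<forall>i\<in>{1..n}. odd (s (2*i-1)) \<noteq> odd (s (2*i))"
  shows "piof n s permutes {1..n}" "tauof n s permutes {1..n}" "Phi n (piof n s) (tauof n s) = s"
proof -
  have sp: "s permutes {1..2*n}" and lt: "\<And>i. i \<in> {1..n} \<Longrightarrow> s (2*i-1) < s (2*i)"
    using sE by (auto simp: evenperms_def)
  have inj: "inj s" using sp permutes_inj by blast
  have rng: "\<And>x. x \<in> {1..2*n} \<Longrightarrow> s x \<in> {1..2*n}" using sp by (meson permutes_in_image)
  have rng2: "s (2*i-1) \<in> {1..2*n} \<and> s (2*i) \<in> {1..2*n}" if "i \<in> {1..n}" for i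
  proof -
    have "2*i-1 \<in> {1..2*n}" "2*i \<in> {1..2*n}" using that by auto
    then show ?thesis using rng by blast
  qed
  have keyp: "\<exists>x\<in>{2*i-1, 2*i}. s x = 2 * piof n s i - 1 \<and> piof n s i \<in> {1..n}" if i: "i \<in> {1..n}" for i
  proof -
    have r: "s (2*i-1) \<in> {1..2*n}" "s (2*i) \<in> {1..2*n}" using rng2[of i] i by auto
    have m: "odd (s (2*i-1)) \<noteq> odd (s (2*i))" using mix i by blast
    show ?thesis using m i r unfolding piof_def
      by (cases "odd (s (2*i-1))") (auto elim!: oddE)
  qed
  have keyt: "\<exists>x\<in>{2*i-1, 2*i}. s x = 2 * tauof n s i \<and> tauof n s i \<in> {1..n}" if i: "i \<in> {1..n}" for i
  proof -
    have r: "s (2*i-1) \<in> {1..2*n}" "s (2*i) \<in> {1..2*n}" using rng2[of i] i by auto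
    have m: "odd (s (2*i-1)) \<noteq> odd (s (2*i))" using mix i by blast
    show ?thesis using m i r unfolding tauof_def
      by (cases "odd (s (2*i-1))") (auto elim!: evenE)
  qed
  have injg: "inj_on g {1..n}" if key: "\<And>i. i \<in> {1..n} \<Longrightarrow> \<exists>x\<in>{2*i-1, 2*i}. s x = h (g i)" for g h :: "nat \<Rightarrow> nat"
  proof (rule inj_onI)
    fix i j assume ij: "i \<in> {1..n}" "j \<in> {1..n}" "g i = g j"
    obtain x where x: "x \<in> {2*i-1, 2*i}" "s x = h (g i)" using key ij(1) by blast
    obtain y where y: "y \<in> {2*j-1, 2*j}" "s y = h (g j)" using key ij(2) by blast
    have "x = y" using x y ij(3) inj by (metis injD)
    then show "i = j" using x(1) y(1) ij(1,2) by auto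
  qed
  have perm: "g permutes {1..n}" if key: "\<And>i. i \<in> {1..n} \<Longrightarrow> \<exists>x\<in>{2*i-1, 2*i}. s x = h (g i) \<and> g i \<in> {1..n}"
    and out: "\<And>i. i \<notin> {1..n} \<Longrightarrow> g i = i" for g h :: "nat \<Rightarrow> nat"
  proof (rule bij_imp_permutes)
    have ij: "inj_on g {1..n}" by (rule injg[where g=g and h=h]) (use key in blast)
    have "g ` {1..n} \<subseteq> {1..n}" using key by blast
    then have "g ` {1..n} = {1..n}" using endo_inj_surj ij by blast
    then show "bij_betw g {1..n} {1..n}" using ij by (simp add: bij_betw_def)
  qed (rule out)
  show pp: "piof n s permutes {1..n}"
  proof (rule perm[where h="\<lambda>v. 2*v-1"])
    fix i :: nat assume "i \<in> {1..n}" then show "\<exists>x\<in>{2*i-1, 2*i}. s x = (\<lambda>v. 2*v-1) (piof n s i) \<and> piof n s i \<in> {1..n}"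
      using keyp by simp
  next
    fix i :: nat assume a: "i \<notin> {1..n}" then show "piof n s i = i" unfolding piof_def if_not_P[OF a] by simp
  qed
  show tp: "tauof n s permutes {1..n}"
  proof (rule perm[where h="\<lambda>v. 2*v"])
    fix i :: nat assume "i \<in> {1..n}" then show "\<exists>x\<in>{2*i-1, 2*i}. s x = (\<lambda>v. 2*v) (tauof n s i) \<and> tauof n s i \<in> {1..n}"
      using keyt by simp
  next
    fix i :: nat assume a: "i \<notin> {1..n}" then show "tauof n s i = i" unfolding tauof_def if_not_P[OF a] by simp
  qed
  show "Phi n (piof n s) (tauof n s) = s"
  proof (rule ext)
    fix x
    show "Phi n (piof n s) (tauof n s) x = s x"
    proof (cases "x \<in> {1..2*n}")
      case True
      then show ?thesis
      proof (cases rule: pair_cases)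
        case (1 i)
        have r: "s (2*i-1) \<in> {1..2*n}" "s (2*i) \<in> {1..2*n}" using rng2[of i] 1 by auto
        show ?thesis unfolding 1(2) Phi_odd[OF 1(1)] using mix 1(1) lt[OF 1(1)] r
          unfolding piof_def tauof_def by (auto elim!: oddE evenE)
      next
        case (2 i)
        have r: "s (2*i-1) \<in> {1..2*n}" "s (2*i) \<in> {1..2*n}" using rng2[of i] 2 by auto
        show ?thesis unfolding 2(2) Phi_even[OF 2(1)] using mix 2(1) lt[OF 2(1)] r
          unfolding piof_def tauof_def by (auto elim!: oddE evenE)
      qed
    next
      case False
      then show ?thesis using sp unfolding Phi_def if_not_P[OF False] by (simp add: permutes_not_in)
    qed
  qed
qed

lemma concat_pairs_len: "length (concat (map (\<lambda>t. [f t, g t]) [0..<m])) = 2*m"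
  by (induct m) auto

lemma concat_pairs_nth:
  "t < m \<Longrightarrow> concat (map (\<lambda>t. [f t, g t]) [0..<m]) ! (2*t) = f t \<and>
                 concat (map (\<lambda>t. [f t, g t]) [0..<m]) ! (2*t+1) = g t"
proof (induct m)
  case 0 then show ?case by simp
next
  case (Suc m)
  show ?case
  proof (cases "t < m")
    case True
    then show ?thesis using Suc by (simp add: nth_append concat_pairs_len)
  next
    case False
    then have "t = m" using Suc by simp
    then show ?thesis by (simp add: nth_append concat_pairs_len)
  qed
qed

lemma concat_map_pairs: "concat (map (\<lambda>t. [h (2*t+1), h (2*t+2)]) [0..<m]) = map h [1..<2*m+1]"
proof (induct m)
  case 0 then show ?case by simp
next
  case (Suc m)
  have "[1..<2*Suc m+1] = [1..<2*m+1] @ [2*m+1, 2*m+2]"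
    by (simp add: upt_Suc_append)
  then show ?case using Suc by simp
qed

lemma prod_pairs: fixes m :: nat shows "(\<Prod>j=1..2*m. f j) = (\<Prod>t<m. f (2*t+1) * f (2*t+2))"
proof (induct m)
  case 0 then show ?case by simp
next
  case (Suc m)
  have "{1..2*Suc m} = insert (2*m+2) (insert (2*m+1) {1..2*m})" by auto
  then have "(\<Prod>j=1..2*Suc m. f j) = f (2*m+2) * (f (2*m+1) * (\<Prod>j=1..2*m. f j))" by simp
  then show ?case using Suc by (simp add: ac_simps)
qed

lemma prod_1m: fixes m :: nat shows "(\<Prod>s=1..m. f s) = (\<Prod>t<m. f (Suc t))"
  using prod.atLeast1_atMost_eq[of f m] by simp

lemma pf_array_alt:
  fixes A :: "nat list \<Rightarrow> 'a::comm_ring_1"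
  shows
  "pf_array m A l =
     (if \<forall>t<m. odd (l!(2*t)) \<noteq> odd (l!(2*t+1)) then
        (\<Prod>t<m. if even (l!(2*t)) then -1 else 1) *
        A (concat (map (\<lambda>t. pairf (l!(2*t)) (l!(2*t+1))) [0..<m]))
      else 0)"
proof -
  have "(\<Prod>t<m. if even (l!(2*t)) then -1 else 1) = (\<Prod>t\<in>{t\<in>{..<m}. even (l!(2*t))}. (-1::'a))"
    by (simp only: prod.inter_filter[OF finite_lessThan])
  also have "\<dots> = (-1) ^ card {t\<in>{..<m}. even (l!(2*t))}" by simp
  also have "{t\<in>{..<m}. even (l!(2*t))} = {s. s < m \<and> even (l!(2*s))}" by auto
  finally have calc: "(\<Prod>t<m. if even (l!(2*t)) then -1 else 1) = (-1::'a) ^ card {s. s < m \<and> even (l!(2*s))}" .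
  show ?thesis unfolding pf_array_def pairf_def Let_def by (simp only: calc)
qed

lemma pairf_swap: "odd a \<noteq> odd b \<Longrightarrow> pairf b a = pairf a b"
  by (auto simp: pairf_def)

lemma alternation:
  fixes A :: "nat list \<Rightarrow> 'a::comm_ring_1"
  shows "alternation_cond m n (pf_array m A)"
  unfolding alternation_cond_def
proof (intro allI impI ballI)
  fix l :: "nat list" and s
  assume len: "length l = 2*m" and "set l \<subseteq> {1..2*n}" and s: "s \<in> {1..m}"
  define r where "r = s - 1"
  have r: "r < m" "2*s-2 = 2*r" "2*s-1 = 2*r+1" using s by (auto simp: r_def)
  define l' where "l' = l[2*r := l!(2*r+1), 2*r+1 := l!(2*r)]"
  have n1: "l'!(2*t) = (if t = r then l!(2*r+1) else l!(2*t))"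
     "l'!(2*t+1) = (if t = r then l!(2*r) else l!(2*t+1))" if t: "t < m" for t
    using t r len by (auto simp: l'_def nth_list_update)
  have c: "(\<forall>t<m. odd (l'!(2*t)) \<noteq> odd (l'!(2*t+1))) \<longleftrightarrow> (\<forall>t<m. odd (l!(2*t)) \<noteq> odd (l!(2*t+1)))"
    using n1 by auto
  have "pf_array m A l' = - pf_array m A l"
  proof (cases "\<forall>t<m. odd (l!(2*t)) \<noteq> odd (l!(2*t+1))")
    case True
    have mr: "odd (l!(2*r)) \<noteq> odd (l!(2*r+1))" using True r by blast
    have a: "map (\<lambda>t. pairf (l'!(2*t)) (l'!(2*t+1))) [0..<m] = map (\<lambda>t. pairf (l!(2*t)) (l!(2*t+1))) [0..<m]"
      using n1 mr by (auto simp: pairf_swap)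
    have p1: "(\<Prod>t<m. if even (l'!(2*t)) then -1 else 1) = (if even (l'!(2*r)) then -1 else (1::'a)) * (\<Prod>t\<in>{..<m}-{r}. if even (l'!(2*t)) then -1 else 1)"
      using r by (simp add: prod.remove)
    have p2: "(\<Prod>t<m. if even (l!(2*t)) then -1 else 1) = (if even (l!(2*r)) then -1 else (1::'a)) * (\<Prod>t\<in>{..<m}-{r}. if even (l!(2*t)) then -1 else 1)"
      using r by (simp add: prod.remove)
    have p3: "(\<Prod>t\<in>{..<m}-{r}. if even (l'!(2*t)) then -1 else (1::'a)) = (\<Prod>t\<in>{..<m}-{r}. if even (l!(2*t)) then -1 else 1)"
      using n1 by (intro prod.cong) auto
    have p4: "(if even (l'!(2*r)) then -1 else (1::'a)) = - (if even (l!(2*r)) then -1 else 1)"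
      using n1[OF r(1)] mr by auto
    show ?thesis using True c unfolding pf_array_alt[of m A l'] pf_array_alt[of m A l] a p1 p2 p3 p4
      by simp
  next
    case False
    have F2: "\<not> (\<forall>t<m. odd (l'!(2*t)) \<noteq> odd (l'!(2*t+1)))" using False c by blast
    show ?thesis unfolding pf_array_alt[of m A l'] pf_array_alt[of m A l] if_not_P[OF False] if_not_P[OF F2]
      by simp
  qed
  then show "pf_array m A (l[2*s-2 := l!(2*s-1), 2*s-1 := l!(2*s-2)]) = - pf_array m A l"
    unfolding r(2,3) l'_def .
qed

lemma pf_shift:
  "concat (map (\<lambda>s. [x s, y s]) [1..<m+1]) = concat (map (\<lambda>t. [x (Suc t), y (Suc t)]) [0..<m])"
proof -
  have "[1..<m+1] = map Suc [0..<m]" by (simp add: map_Suc_upt)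
  then show ?thesis by (simp only: map_map comp_def)
qed

lemma pf_pairs:
  fixes A :: "nat list \<Rightarrow> 'a::comm_ring_1"
  shows "pf_array m A (concat (map (\<lambda>t. [f t, g t]) [0..<m])) =
    (if \<forall>t<m. odd (f t) \<noteq> odd (g t) then
        (\<Prod>t<m. if even (f t) then -1 else 1) * A (concat (map (\<lambda>t. pairf (f t) (g t)) [0..<m]))
     else 0)"
proof -
  let ?l = "concat (map (\<lambda>t. [f t, g t]) [0..<m])"
  have n1: "?l!(2*t) = f t" "?l!(2*t+1) = g t" if "t < m" for t
    using concat_pairs_nth[OF that, of f g] by auto
  have c: "(\<forall>t<m. odd (?l!(2*t)) \<noteq> odd (?l!(2*t+1))) \<longleftrightarrow> (\<forall>t<m. odd (f t) \<noteq> odd (g t))"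
    using n1 by auto
  have p: "(\<Prod>t<m. if even (?l!(2*t)) then -1 else (1::'a)) = (\<Prod>t<m. if even (f t) then -1 else 1)"
    using n1 by (intro prod.cong) auto
  have a: "map (\<lambda>t. pairf (?l!(2*t)) (?l!(2*t+1))) [0..<m] = map (\<lambda>t. pairf (f t) (g t)) [0..<m]"
    using n1 by auto
  show ?thesis unfolding pf_array_alt[of m A ?l] c p a ..
qed

lemma finite_evenperms: "finite (evenperms n)"
proof -
  have "evenperms n \<subseteq> {p. p permutes {1..2*n}}" by (auto simp: evenperms_def)
  then show ?thesis using finite_permutations[of "{1..2*n}"] finite_subset by blast
qed

theorem proposition2p2:
  fixes m n :: nat and A :: "nat list \<Rightarrow> 'a::field_char_0"
  assumes "0 < m" and "0 < n"
  shows "alternation_cond m n (pf_array m A) \<and> hyperpf m n (pf_array m A) = hyperdet m n A"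
proof
  show "alternation_cond m n (pf_array m A)" by (rule alternation)
next
  define P where "P = {p. p permutes {1..n}}"
  define D where "D = PiE {1..2*m} (\<lambda>_. P)"
  define E where "E = PiE {1..m} (\<lambda>_. evenperms n)"
  define G where "G T = restrict (\<lambda>s. Phi n (T (2*s-1)) (T (2*s))) {1..m}" for T :: "nat \<Rightarrow> nat \<Rightarrow> nat"
  define F where "F \<sigma> = (\<Prod>s=1..m. of_int (sign (\<sigma> s))) *
        (\<Prod>i=1..n. pf_array m A (concat (map (\<lambda>s. [\<sigma> s (2*i-1), \<sigma> s (2*i)]) [1..<m+1])))"
    for \<sigma> :: "nat \<Rightarrow> nat \<Rightarrow> nat"
  define H where "H T = (\<Prod>j=1..2*m. of_int (sign (T j))) * (\<Prod>i=1..n. A (map (\<lambda>j. T j i) [1..<2*m+1]))"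
    for T :: "nat \<Rightarrow> nat \<Rightarrow> nat"
  have lhs: "hyperpf m n (pf_array m A) = 1 / fact n * sum F E"
    unfolding hyperpf_def F_def E_def ..
  have rhs: "hyperdet m n A = 1 / fact n * sum H D"
    unfolding hyperdet_def H_def D_def P_def ..
  have finE: "finite E" unfolding E_def by (intro finite_PiE finite_evenperms) simp
  have DT: "T j permutes {1..n}" if "T \<in> D" "j \<in> {1..2*m}" for T j
    using that by (auto simp: D_def P_def)
  have GT: "G T (Suc t) = Phi n (T (2*t+1)) (T (2*t+2))" if "t < m" for T t
    using that by (simp add: G_def)
  have GDE: "G ` D \<subseteq> E"
  proof
    fix \<sigma> assume "\<sigma> \<in> G ` D"
    then obtain T where T: "T \<in> D" "\<sigma> = G T" by blast
    have "Phi n (T (2*s-1)) (T (2*s)) \<in> evenperms n" if "s \<in> {1..m}" for s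
      using that by (intro Phi_evenperms DT[OF T(1)]) auto
    then show "\<sigma> \<in> E" unfolding T(2) E_def G_def by auto
  qed
  have inj: "inj_on G D"
  proof (rule inj_onI)
    fix T1 T2 assume T: "T1 \<in> D" "T2 \<in> D" "G T1 = G T2"
    show "T1 = T2"
    proof (rule ext)
      fix j
      show "T1 j = T2 j"
      proof (cases "j \<in> {1..2*m}")
        case True
        then show ?thesis
        proof (cases rule: pair_cases)
          case (1 s)
          have "Phi n (T1 (2*s-1)) (T1 (2*s)) = Phi n (T2 (2*s-1)) (T2 (2*s))"
            using fun_cong[OF T(3), of s] 1 by (simp add: G_def)
          then have "piof n (Phi n (T1 (2*s-1)) (T1 (2*s))) = piof n (Phi n (T2 (2*s-1)) (T2 (2*s)))" by simp
          moreover have m1: "2*s-1 \<in> {1..2*m}" "2*s \<in> {1..2*m}" using 1(1) by auto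
          moreover have "T1 (2*s-1) permutes {1..n}" "T1 (2*s) permutes {1..n}"
             "T2 (2*s-1) permutes {1..n}" "T2 (2*s) permutes {1..n}" using DT T(1,2) m1 by blast+
          ultimately show ?thesis unfolding 1(2) by (simp add: Phi_inv)
        next
          case (2 s)
          have "Phi n (T1 (2*s-1)) (T1 (2*s)) = Phi n (T2 (2*s-1)) (T2 (2*s))"
            using fun_cong[OF T(3), of s] 2 by (simp add: G_def)
          then have "tauof n (Phi n (T1 (2*s-1)) (T1 (2*s))) = tauof n (Phi n (T2 (2*s-1)) (T2 (2*s)))" by simp
          moreover have m1: "2*s-1 \<in> {1..2*m}" "2*s \<in> {1..2*m}" using 2(1) by auto
          moreover have "T1 (2*s-1) permutes {1..n}" "T1 (2*s) permutes {1..n}"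
             "T2 (2*s-1) permutes {1..n}" "T2 (2*s) permutes {1..n}" using DT T(1,2) m1 by blast+
          ultimately show ?thesis unfolding 2(2) by (simp add: Phi_inv)
        qed
      next
        case False
        then show ?thesis using T(1,2) by (auto simp: D_def PiE_def extensional_def)
      qed
    qed
  qed
  have zero: "F \<sigma> = 0" if \<sigma>: "\<sigma> \<in> E - G ` D" for \<sigma>
  proof -
    have \<sigma>E: "\<sigma> \<in> E" and nG: "\<sigma> \<notin> G ` D" using \<sigma> by auto
    have se: "\<sigma> s \<in> evenperms n" if "s \<in> {1..m}" for s using \<sigma>E that by (auto simp: E_def)
    have "\<exists>s\<in>{1..m}. \<exists>i\<in>{1..n}. odd (\<sigma> s (2*i-1)) = odd (\<sigma> s (2*i))"
    proof (rule ccontr)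
      assume "\<not> ?thesis"
      then have mix: "\<forall>i\<in>{1..n}. odd (\<sigma> s (2*i-1)) \<noteq> odd (\<sigma> s (2*i))" if "s \<in> {1..m}" for s
        using that by blast
      note pf = piof_facts[OF se mix]
      define T where "T j = (if j \<in> {1..2*m} then (if odd j then piof n (\<sigma> ((j+1) div 2))
                              else tauof n (\<sigma> (j div 2))) else undefined)" for j
      have TD: "T \<in> D"
        unfolding D_def P_def
      proof (rule PiE_I)
        fix j assume j: "j \<in> {1..2*m}"
        then show "T j \<in> {p. p permutes {1..n}}"
        proof (cases rule: pair_cases)
          case (1 s)
          have "(2*s-1+1) div 2 = s" using 1 by auto
          then have "T j = piof n (\<sigma> s)" using j 1 by (auto simp: T_def)
          then show ?thesis using pf(1)[OF 1(1) 1(1)] by simp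
        next
          case (2 s)
          then have "T j = tauof n (\<sigma> s)" using j 2 by (auto simp: T_def)
          then show ?thesis using pf(2)[OF 2(1) 2(1)] by simp
        qed
      next
        fix j assume a: "j \<notin> {1..2*m}" then show "T j = undefined" by (subst T_def) (rule if_not_P[OF a])
      qed
      have "G T = \<sigma>"
      proof (rule ext)
        fix s
        show "G T s = \<sigma> s"
        proof (cases "s \<in> {1..m}")
          case True
          have "(2*s-1+1) div 2 = s" using True by auto
          then have "T (2*s-1) = piof n (\<sigma> s)" "T (2*s) = tauof n (\<sigma> s)" using True
            by (auto simp: T_def)
          then show ?thesis using True pf(3)[OF True True] by (simp add: G_def)
        next
          case False
          then show ?thesis using \<sigma>E by (auto simp: G_def E_def PiE_def extensional_def)
        qed
      qed
      then show False using TD nG by blast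
    qed
    then obtain s i where si: "s \<in> {1..m}" "i \<in> {1..n}" "odd (\<sigma> s (2*i-1)) = odd (\<sigma> s (2*i))"
      by blast
    have l: "concat (map (\<lambda>s. [\<sigma> s (2*i-1), \<sigma> s (2*i)]) [1..<m+1]) =
        concat (map (\<lambda>t. [\<sigma> (Suc t) (2*i-1), \<sigma> (Suc t) (2*i)]) [0..<m])" by (rule pf_shift)
    have nm: "\<not> (\<forall>t<m. odd (\<sigma> (Suc t) (2*i-1)) \<noteq> odd (\<sigma> (Suc t) (2*i)))"
    proof
      assume a: "\<forall>t<m. odd (\<sigma> (Suc t) (2*i-1)) \<noteq> odd (\<sigma> (Suc t) (2*i))"
      have "s - 1 < m" "Suc (s-1) = s" using si by auto
      then show False using a si(3) by metis
    qed
    have "pf_array m A (concat (map (\<lambda>s. [\<sigma> s (2*i-1), \<sigma> s (2*i)]) [1..<m+1])) = 0"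
      unfolding l pf_pairs if_not_P[OF nm] ..
    then have "(\<Prod>i=1..n. pf_array m A (concat (map (\<lambda>s. [\<sigma> s (2*i-1), \<sigma> s (2*i)]) [1..<m+1]))) = 0"
      using si(2) by (intro prod_zero) auto
    then show ?thesis by (simp add: F_def)
  qed
  have termeq: "F (G T) = H T" if T: "T \<in> D" for T
  proof -
    define p where "p t = T (2*t+1)" for t
    define q where "q t = T (2*t+2)" for t
    have pq: "p t permutes {1..n}" "q t permutes {1..n}" if "t < m" for t
      using DT[OF T] that by (auto simp: p_def q_def)
    have GT': "G T (Suc t) = Phi n (p t) (q t)" if "t < m" for t
      using GT[OF that] by (simp add: p_def q_def)
    have s1: "(\<Prod>s=1..m. of_int (sign (G T s))) = (\<Prod>t<m. of_int (sign (Phi n (p t) (q t))) :: 'a)"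
      unfolding prod_1m using GT' by (intro prod.cong) auto
    have s2: "pf_array m A (concat (map (\<lambda>s. [G T s (2*i-1), G T s (2*i)]) [1..<m+1])) =
       (\<Prod>t<m. if q t i < p t i then -1 else 1) * A (map (\<lambda>j. T j i) [1..<2*m+1])" if i: "i \<in> {1..n}" for i
    proof -
      have "concat (map (\<lambda>s. [G T s (2*i-1), G T s (2*i)]) [1..<m+1]) =
          concat (map (\<lambda>t. [G T (Suc t) (2*i-1), G T (Suc t) (2*i)]) [0..<m])" by (rule pf_shift)
      also have "\<dots> = concat (map (\<lambda>t. [Phi n (p t) (q t) (2*i-1), Phi n (p t) (q t) (2*i)]) [0..<m])"
        by (intro arg_cong[where f=concat] map_cong) (auto simp: GT')
      finally have l: "concat (map (\<lambda>s. [G T s (2*i-1), G T s (2*i)]) [1..<m+1]) =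
          concat (map (\<lambda>t. [Phi n (p t) (q t) (2*i-1), Phi n (p t) (q t) (2*i)]) [0..<m])" .
      have mix: "\<forall>t<m. odd (Phi n (p t) (q t) (2*i-1)) \<noteq> odd (Phi n (p t) (q t) (2*i))"
        using Phi_facts(1)[OF pq(1) pq(2) i] by blast
      have e: "(\<Prod>t<m. if even (Phi n (p t) (q t) (2*i-1)) then -1 else 1) = (\<Prod>t<m. if q t i < p t i then -1 else (1::'a))"
        using Phi_facts(2)[OF pq(1) pq(2) i] by (intro prod.cong) auto
      have "concat (map (\<lambda>t. pairf (Phi n (p t) (q t) (2*i-1)) (Phi n (p t) (q t) (2*i))) [0..<m]) =
            concat (map (\<lambda>t. [(\<lambda>j. T j i) (2*t+1), (\<lambda>j. T j i) (2*t+2)]) [0..<m])"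
        using Phi_facts(3)[OF pq(1) pq(2) i] by (intro arg_cong[where f=concat] map_cong) (auto simp: p_def q_def)
      also have "\<dots> = map (\<lambda>j. T j i) [1..<2*m+1]" by (rule concat_map_pairs)
      finally have a: "concat (map (\<lambda>t. pairf (Phi n (p t) (q t) (2*i-1)) (Phi n (p t) (q t) (2*i))) [0..<m]) =
            map (\<lambda>j. T j i) [1..<2*m+1]" .
      show ?thesis unfolding l pf_pairs if_P[OF mix] e a ..
    qed
    have s3: "(\<Prod>i=1..n. pf_array m A (concat (map (\<lambda>s. [G T s (2*i-1), G T s (2*i)]) [1..<m+1]))) =
       (\<Prod>i=1..n. \<Prod>t<m. if q t i < p t i then -1 else (1::'a)) * (\<Prod>i=1..n. A (map (\<lambda>j. T j i) [1..<2*m+1]))"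
      unfolding prod.distrib[symmetric] by (rule prod.cong[OF refl s2])
    have s4: "(\<Prod>i=1..n. \<Prod>t<m. if q t i < p t i then -1 else (1::'a)) =
        (\<Prod>t<m. (-1) ^ card {i\<in>{1..n}. q t i < p t i})"
    proof -
      have "(\<Prod>i=1..n. \<Prod>t<m. if q t i < p t i then -1 else (1::'a)) =
          (\<Prod>t<m. \<Prod>i=1..n. if q t i < p t i then -1 else (1::'a))" by (rule prod.swap)
      also have "\<dots> = (\<Prod>t<m. \<Prod>i\<in>{i\<in>{1..n}. q t i < p t i}. -1)"
        by (simp only: prod.inter_filter[OF finite_atLeastAtMost])
      also have "\<dots> = (\<Prod>t<m. (-1) ^ card {i\<in>{1..n}. q t i < p t i})" by (simp only: prod_constant)
      finally show ?thesis .
    qed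
    have s5: "(\<Prod>t<m. of_int (sign (Phi n (p t) (q t))) * (-1) ^ card {i\<in>{1..n}. q t i < p t i}) =
        (\<Prod>j=1..2*m. of_int (sign (T j)) :: 'a)"
    proof -
      have "(\<Prod>t<m. of_int (sign (Phi n (p t) (q t))) * (-1) ^ card {i\<in>{1..n}. q t i < p t i}) =
          (\<Prod>t<m. of_int (sign (T (2*t+1))) * (of_int (sign (T (2*t+2))) :: 'a))"
      proof (rule prod.cong[OF refl])
        fix t assume "t \<in> {..<m}"
        then have "sign (Phi n (p t) (q t)) * (-1) ^ card {i\<in>{1..n}. q t i < p t i} = sign (p t) * sign (q t)"
          using Phi_sign[OF pq(1) pq(2)] by auto
        then have "(of_int (sign (Phi n (p t) (q t))) * (-1) ^ card {i\<in>{1..n}. q t i < p t i} :: 'a) =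
             of_int (sign (p t)) * of_int (sign (q t))"
          by (drule_tac arg_cong[where f="of_int :: int \<Rightarrow> 'a"]) (simp only: of_int_mult of_int_power of_int_minus of_int_1)
        then show "(of_int (sign (Phi n (p t) (q t))) * (-1) ^ card {i\<in>{1..n}. q t i < p t i} :: 'a) =
             of_int (sign (T (2*t+1))) * of_int (sign (T (2*t+2)))" by (simp add: p_def q_def)
      qed
      also have "\<dots> = (\<Prod>j=1..2*m. of_int (sign (T j)))" by (rule prod_pairs[symmetric])
      finally show ?thesis .
    qed
    show ?thesis
      unfolding F_def H_def s1 s3 s4 s5[symmetric] by (simp only: prod.distrib mult.assoc)
  qed
  have "sum F E = sum F (G ` D)"
    using finE GDE zero by (intro sum.mono_neutral_right) auto
  also have "\<dots> = sum (F \<circ> G) D" using inj by (rule sum.reindex)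
  also have "\<dots> = sum H D" using termeq by (intro sum.cong) auto
  finally show "hyperpf m n (pf_array m A) = hyperdet m n A" unfolding lhs rhs by simp
qed

end
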